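(* Consider a road network given by a directed graph with node set $\mathcal{N}_r$ and a position map $P:\mathcal{N}_r\to\mathbb{R}^2$, and a maximum speed $v_{\max}>0$. For each transport assignment $k$ let $n_k=n_k[1],\dots,n_k[N_k]$ be its route (a path of nodes), $t^S_k$ its earliest start time and $t^D_k$ its latest arrival time, and define for $a=1,\dots,N_k$ $$\underline{t}_k[a]=t^S_k+\sum_{m=1}^{a-1}\frac{\|P(n_k[m+1])-P(n_k[m])\|_2}{v_{\max}},\qquad \bar{t}_k[a]=t^D_k-\sum_{m=a}^{N_k-1}\frac{\|P(n_k[m+1])-P(n_k[m])\|_2}{v_{\max}}.$$ Define the coordination function $g(i,j)\in\{0,1\}$ by $g(i,j)=1$ iff there exist indices $a,b$ with $P(n_i[a])=P(n_j[b])$, $P(n_i[a+1])=P(n_j[b+1])$, $[\underline{t}_i[a],\bar{t}_i[a]]\cap[\underline{t}_j[b],\bar{t}_j[b]]\neq\emptyset$ and $[\underline{t}_i[a+1],\bar{t}_i[a+1]]\cap[\underline{t}_j[b+1],\bar{t}_j[b+1]]\neq\emptyset$; otherwise $g(i,j)=0$. Fix $p\in\mathbb{R}^3$. For each assignment $k$ let $$\mathcal{R}_k=\left\{\begin{bmatrix}P(n_k[a])\\ \underline{t}_k[a]\end{bmatrix}: a=1,\dots,N_k\right\}\cup\left\{\begin{bmatrix}P(n_k[a])\\ \bar{t}_k[a]\end{bmatrix}: a=1,\dots,N_k\right\}\subset\mathbb{R}^3,$$ and $\mathcal{I}_k=[\min_{v\in\mathcal{R}_k}p^\top v,\ \max_{v\in\mathcal{R}_k}p^\top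 v]$. Then for any pair of transport assignments $(i,j)$, $\mathcal{I}_i\cap\mathcal{I}_j=\emptyset$ implies $g(i,j)=0$.
   Context: A transport assignment consists of a start node, a destination node, an earliest start time and a latest arrival time; its route is a given path in the graph from start to destination. The quantities $\underline{t}_k[a],\bar{t}_k[a]$ are lower and upper bounds on the time at which a vehicle implementing assignment $k$ at speed at most $v_{\max}$ can be at node $n_k[a]$. *)

theory Defs
  imports "HOL-Analysis.Analysis"
begin

text \<open>Routes are lists of nodes, indexed from 0 (paper index a corresponds to list index a-1).\<close>

definition seglen :: "('n \<Rightarrow> real^2) \<Rightarrow> 'n list \<Rightarrow> nat \<Rightarrow> real" where
  "seglen P ns m = norm (P (ns ! (Suc m)) - P (ns ! m))"

definition t_low :: "('n \<Rightarrow> real^2) \<Rightarrow> real \<Rightarrow> real \<Rightarrow> 'n list \<Rightarrow> nat \<Rightarrow> real" where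
  "t_low P vmax tS ns a = tS + (\<Sum>m<a. seglen P ns m / vmax)"

definition t_up :: "('n \<Rightarrow> real^2) \<Rightarrow> real \<Rightarrow> real \<Rightarrow> 'n list \<Rightarrow> nat \<Rightarrow> real" where
  "t_up P vmax tD ns a = tD - (\<Sum>m\<in>{a..<length ns - 1}. seglen P ns m / vmax)"

definition coord :: "('n \<Rightarrow> real^2) \<Rightarrow> real \<Rightarrow> ('k \<Rightarrow> 'n list) \<Rightarrow> ('k \<Rightarrow> real) \<Rightarrow> ('k \<Rightarrow> real)
    \<Rightarrow> 'k \<Rightarrow> 'k \<Rightarrow> bool" where
  "coord P vmax route tS tD i j \<longleftrightarrow>
     (\<exists>a b. Suc a < length (route i) \<and> Suc b < length (route j) \<and>
        P (route i ! a) = P (route j ! b) \<and>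
        P (route i ! Suc a) = P (route j ! Suc b) \<and>
        {t_low P vmax (tS i) (route i) a .. t_up P vmax (tD i) (route i) a} \<inter>
        {t_low P vmax (tS j) (route j) b .. t_up P vmax (tD j) (route j) b} \<noteq> {} \<and>
        {t_low P vmax (tS i) (route i) (Suc a) .. t_up P vmax (tD i) (route i) (Suc a)} \<inter>
        {t_low P vmax (tS j) (route j) (Suc b) .. t_up P vmax (tD j) (route j) (Suc b)} \<noteq> {})"

definition pt3 :: "real^2 \<Rightarrow> real \<Rightarrow> real^3" where
  "pt3 x t = vector [x $ 1, x $ 2, t]"

definition Rset :: "('n \<Rightarrow> real^2) \<Rightarrow> real \<Rightarrow> 'n list \<Rightarrow> real \<Rightarrow> real \<Rightarrow> (real^3) set" where
  "Rset P vmax ns tS tD =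
     {pt3 (P (ns ! a)) (t_low P vmax tS ns a) | a. a < length ns} \<union>
     {pt3 (P (ns ! a)) (t_up P vmax tD ns a) | a. a < length ns}"

definition Iint :: "real^3 \<Rightarrow> ('n \<Rightarrow> real^2) \<Rightarrow> real \<Rightarrow> 'n list \<Rightarrow> real \<Rightarrow> real \<Rightarrow> real set" where
  "Iint p P vmax ns tS tD =
     {Min ((\<lambda>v. p \<bullet> v) ` Rset P vmax ns tS tD) .. Max ((\<lambda>v. p \<bullet> v) ` Rset P vmax ns tS tD)}"

end

theory Submission
  imports Defs
begin

lemma inner_pt3: "p \<bullet> pt3 x t = p$1*x$1 + p$2*x$2 + p$3*t"
  unfolding pt3_def inner_vec_def by (simp add: sum_3 vector_3)

lemma Rset_finite: "finite (Rset P vmax ns tS tD)"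
proof -
  have "{pt3 (P (ns ! a)) (t_low P vmax tS ns a) | a. a < length ns}
        = (\<lambda>a. pt3 (P (ns ! a)) (t_low P vmax tS ns a)) ` {..<length ns}" by auto
  moreover have "{pt3 (P (ns ! a)) (t_up P vmax tD ns a) | a. a < length ns}
        = (\<lambda>a. pt3 (P (ns ! a)) (t_up P vmax tD ns a)) ` {..<length ns}" by auto
  ultimately show ?thesis unfolding Rset_def by simp
qed

lemma in_Iint:
  assumes a: "a < length ns"
    and t1: "t_low P vmax tS ns a \<le> t" and t2: "t \<le> t_up P vmax tD ns a"
  shows "p \<bullet> pt3 (P (ns ! a)) t \<in> Iint p P vmax ns tS tD"
proof -
  let ?R = "(\<lambda>v. p \<bullet> v) ` Rset P vmax ns tS tD"
  let ?x = "P (ns ! a)"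
  have fin: "finite ?R" using Rset_finite by (intro finite_imageI)
  have m1: "p \<bullet> pt3 ?x (t_low P vmax tS ns a) \<in> ?R"
    unfolding Rset_def using a by blast
  have m2: "p \<bullet> pt3 ?x (t_up P vmax tD ns a) \<in> ?R"
    unfolding Rset_def using a by blast
  have lin: "min (p \<bullet> pt3 ?x (t_low P vmax tS ns a)) (p \<bullet> pt3 ?x (t_up P vmax tD ns a))
      \<le> p \<bullet> pt3 ?x t \<and> p \<bullet> pt3 ?x t \<le>
      max (p \<bullet> pt3 ?x (t_low P vmax tS ns a)) (p \<bullet> pt3 ?x (t_up P vmax tD ns a))"
  proof (cases "p$3 \<ge> 0")
    case True
    then have "p$3 * t_low P vmax tS ns a \<le> p$3 * t" "p$3 * t \<le> p$3 * t_up P vmax tD ns a"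
      using t1 t2 by (auto intro: mult_left_mono)
    then show ?thesis unfolding inner_pt3 by linarith
  next
    case False
    then have "p$3 * t_low P vmax tS ns a \<ge> p$3 * t" "p$3 * t \<ge> p$3 * t_up P vmax tD ns a"
      using t1 t2 by (auto intro: mult_left_mono_neg)
    then show ?thesis unfolding inner_pt3 by linarith
  qed
  have "Min ?R \<le> p \<bullet> pt3 ?x t"
    using lin Min_le[OF fin m1] Min_le[OF fin m2] by linarith
  moreover have "p \<bullet> pt3 ?x t \<le> Max ?R"
    using lin Max_ge[OF fin m1] Max_ge[OF fin m2] by linarith
  ultimately show ?thesis unfolding Iint_def by simp
qed

theorem proposition6:
  fixes E :: "'n \<Rightarrow> 'n \<Rightarrow> bool"
    and P :: "'n \<Rightarrow> real^2"
    and vmax :: real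
    and route :: "'k \<Rightarrow> 'n list"
    and tS tD :: "'k \<Rightarrow> real"
    and p :: "real^3"
    and i j :: 'k
  assumes vmax_pos: "vmax > 0"
    and routes_paths: "\<And>k. route k \<noteq> [] \<and>
                (\<forall>m. Suc m < length (route k) \<longrightarrow> E (route k ! m) (route k ! Suc m))"
    and disj: "Iint p P vmax (route i) (tS i) (tD i) \<inter> Iint p P vmax (route j) (tS j) (tD j) = {}"
  shows "\<not> coord P vmax route tS tD i j"
proof
  assume "coord P vmax route tS tD i j"
  then obtain a b t where ab: "Suc a < length (route i)" "Suc b < length (route j)"
    and eq: "P (route i ! a) = P (route j ! b)"
    and ti: "t \<in> {t_low P vmax (tS i) (route i) a .. t_up P vmax (tD i) (route i) a}"
    and tj: "t \<in> {t_low P vmax (tS j) (route j) b .. t_up P vmax (tD j) (route j) b}"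
    unfolding coord_def by blast
  have "p \<bullet> pt3 (P (route i ! a)) t \<in> Iint p P vmax (route i) (tS i) (tD i)"
    using ab ti by (intro in_Iint) auto
  moreover have "p \<bullet> pt3 (P (route j ! b)) t \<in> Iint p P vmax (route j) (tS j) (tD j)"
    using ab tj by (intro in_Iint) auto
  ultimately show False using disj eq by auto
qed

end
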